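(* Let $p$ be a prime and $\lambda$ a partition with $r(\lambda)=(r_1,\ldots,r_{p-1})$. Suppose $p\nmid|\lambda|$ and there exist distinct $a,c\in\{1,\ldots,p-1\}$ with $r_a=r_c=\max r(\lambda)$. Then $c^{(p)}_\lambda\neq0$.
   Context: A composition is a finite sequence $\delta=(\delta_1,\ldots,\delta_s)$ of positive integers, $\ell(\delta)=s$, $|\delta|=\sum_i\delta_i$; a partition is a composition with weakly decreasing parts. Partial sums $\delta^+_j=\sum_{i=1}^j\delta_i$. $n_d(\delta)$ is the number of parts of $\delta$ equal to $d$. A composition is $p'$-cumulative if it is nonempty and $p\nmid\delta^+_j$ for all $1\le j\le\ell(\delta)$. $c^{(p)}_\lambda$ is the number of $p'$-cumulative compositions that are rearrangements of $\lambda$. For $1\le j\le p-1$, $r_j(\lambda)=\sum_{i\equiv j\,(\mathrm{mod}\ p)}n_i(\lambda)$, $r(\lambda)=(r_1(\lambda),\ldots,r_{p-1}(\lambda))$, and $\max r(\lambda)$ is its largest entry. *)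

theory Defs
  imports Main "HOL-Library.Multiset" "HOL-Computational_Algebra.Primes"
begin

definition is_composition :: "nat list \<Rightarrow> bool" where
  "is_composition \<delta> \<longleftrightarrow> (\<forall>x\<in>set \<delta>. 0 < x)"

definition is_partition :: "nat list \<Rightarrow> bool" where
  "is_partition lam \<longleftrightarrow> is_composition lam \<and> sorted_wrt (\<ge>) lam"

definition psum :: "nat list \<Rightarrow> nat \<Rightarrow> nat" where
  "psum \<delta> j = sum_list (take j \<delta>)"

definition n_d :: "nat \<Rightarrow> nat list \<Rightarrow> nat" where
  "n_d d \<delta> = count (mset \<delta>) d"

definition p_cumulative :: "nat \<Rightarrow> nat list \<Rightarrow> bool" where
  "p_cumulative p \<delta> \<longleftrightarrow> is_composition \<delta> \<and> \<delta> \<noteq> [] \<and>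
     (\<forall>j. 1 \<le> j \<and> j \<le> length \<delta> \<longrightarrow> \<not> p dvd psum \<delta> j)"

definition c_p :: "nat \<Rightarrow> nat list \<Rightarrow> nat" where
  "c_p p lam = card {\<delta>. mset \<delta> = mset lam \<and> p_cumulative p \<delta>}"

definition r_j :: "nat \<Rightarrow> nat list \<Rightarrow> nat \<Rightarrow> nat" where
  "r_j p lam j = length (filter (\<lambda>x. x mod p = j mod p) lam)"

definition max_r :: "nat \<Rightarrow> nat list \<Rightarrow> nat" where
  "max_r p lam = Max (r_j p lam ` {1..p-1})"

end

theory Submission
  imports Defs
begin

definition cnt :: "nat \<Rightarrow> nat multiset \<Rightarrow> nat \<Rightarrow> nat" where
  "cnt p R r = size (filter_mset (\<lambda>x. x mod p = r) R)"

definition Good :: "nat \<Rightarrow> nat \<Rightarrow> nat multiset \<Rightarrow> bool" where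
  "Good p t R \<longleftrightarrow> (\<exists>xs. mset xs = R \<and> (\<forall>j. 1 \<le> j \<and> j \<le> length xs \<longrightarrow> \<not> p dvd (t + psum xs j)))"

lemma psum_Cons_Suc: "psum (x # xs) (Suc k) = x + psum xs k"
  by (simp add: psum_def)

lemma Good_empty: "Good p t {#}"
  unfolding Good_def by (rule exI[of _ "[]"]) simp

lemma Good_step:
  assumes "x \<in># R" "\<not> p dvd (t + x)" "Good p (t + x) (R - {#x#})"
  shows "Good p t R"
proof -
  obtain xs where xs: "mset xs = R - {#x#}"
    "\<forall>j. 1 \<le> j \<and> j \<le> length xs \<longrightarrow> \<not> p dvd (t + x + psum xs j)"
    using assms(3) unfolding Good_def by blast
  have "mset (x # xs) = R" using xs(1) assms(1) by simp
  moreover have "\<forall>j. 1 \<le> j \<and> j \<le> length (x # xs) \<longrightarrow> \<not> p dvd (t + psum (x # xs) j)"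
  proof (intro allI impI)
    fix j assume j: "1 \<le> j \<and> j \<le> length (x # xs)"
    then obtain k where k: "j = Suc k" by (cases j) auto
    show "\<not> p dvd (t + psum (x # xs) j)"
    proof (cases k)
      case 0
      then show ?thesis using k assms(2) by (simp add: psum_def)
    next
      case (Suc k')
      then show ?thesis using k j xs(2)[rule_format, of k] by (simp add: psum_Cons_Suc add.assoc)
    qed
  qed
  ultimately show ?thesis unfolding Good_def by blast
qed

lemma cnt_remove:
  assumes "x \<in># R"
  shows "cnt p R r = cnt p (R - {#x#}) r + (if x mod p = r then 1 else 0)"
proof -
  have "cnt p (add_mset x (R - {#x#})) r = cnt p (R - {#x#}) r + (if x mod p = r then 1 else 0)"
    by (simp add: cnt_def)
  then show ?thesis by (simp only: insert_DiffM[OF assms])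
qed

lemma cnt_pos_ex: "cnt p R v \<ge> 1 \<Longrightarrow> \<exists>x. x \<in># R \<and> x mod p = v"
proof -
  assume "cnt p R v \<ge> 1"
  then have "size (filter_mset (\<lambda>x. x mod p = v) R) \<noteq> 0" unfolding cnt_def by linarith
  then have "filter_mset (\<lambda>x. x mod p = v) R \<noteq> {#}" by (metis size_empty)
  then obtain x where "x \<in># filter_mset (\<lambda>x. x mod p = v) R" by (metis multiset_nonemptyE)
  then show ?thesis by auto
qed

lemma cnt_mem: "x \<in># R \<Longrightarrow> cnt p R (x mod p) \<ge> 1"
proof -
  assume "x \<in># R"
  then have "x \<in># filter_mset (\<lambda>y. y mod p = x mod p) R" by simp
  then have "filter_mset (\<lambda>y. y mod p = x mod p) R \<noteq> {#}" by (metis empty_iff set_mset_empty)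
  then have "size (filter_mset (\<lambda>y. y mod p = x mod p) R) \<noteq> 0" by (metis size_eq_0_iff_empty)
  then show ?thesis unfolding cnt_def by linarith
qed

lemma dvd_iff_mod: "(p::nat) dvd (t + x) \<longleftrightarrow> p dvd (t + x mod p)"
  by (simp add: dvd_eq_mod_eq_0 mod_add_right_eq)

lemma dvd_same0: "(p::nat) dvd (t + a) \<Longrightarrow> p dvd (t + b) \<Longrightarrow> a \<le> b \<Longrightarrow> a mod p = b mod p"
proof -
  assume h: "p dvd (t + a)" "p dvd (t + b)" "a \<le> b"
  have "p dvd (t + b) - (t + a)" using h dvd_diff_nat by blast
  then have "p dvd b - a" by simp
  then show ?thesis using h(3) mod_eq_dvd_iff_nat by metis
qed

lemma dvd_same: "(p::nat) dvd (t + a) \<Longrightarrow> p dvd (t + b) \<Longrightarrow> a mod p = b mod p"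
  by (metis dvd_same0 nat_le_linear)

lemma dvd_sum_mset: "(\<forall>x\<in>#M. (p::nat) dvd x) \<Longrightarrow> p dvd sum_mset M"
  by (induction M) auto

lemma dvd_sum_list: "(\<forall>x\<in>set xs. (p::nat) dvd x) \<Longrightarrow> p dvd sum_list xs"
  by (induction xs) auto


lemma cnt_rm_same: "x \<in># R \<Longrightarrow> x mod p = v \<Longrightarrow> cnt p (R - {#x#}) v + 1 = cnt p R v"
  using cnt_remove[of x R p v] by simp

lemma cnt_rm_other: "x \<in># R \<Longrightarrow> x mod p \<noteq> r \<Longrightarrow> cnt p (R - {#x#}) r = cnt p R r"
  using cnt_remove[of x R p r] by simp

lemma main_lemma:
  assumes "\<forall>x\<in>#R. \<not> p dvd x" "\<not> p dvd (t + sum_mset R)" "w \<noteq> u"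
   "\<forall>r. r \<noteq> w \<and> r \<noteq> u \<longrightarrow> cnt p R r \<le> cnt p R u"
   "cnt p R u \<le> cnt p R w" "cnt p R w \<le> cnt p R u + 2"
   "cnt p R w = cnt p R u + 2 \<longrightarrow> \<not> p dvd (t + w)"
  shows "Good p t R"
  using assms
proof (induction "size R" arbitrary: R t w u rule: less_induct)
  case less
  note H = less.prems
  have pick: "Good p t R" if x: "x \<in># R" "\<not> p dvd (t + x)" and wu: "w' \<noteq> u'"
    "\<forall>r. r \<noteq> w' \<and> r \<noteq> u' \<longrightarrow> cnt p (R-{#x#}) r \<le> cnt p (R-{#x#}) u'"
    "cnt p (R-{#x#}) u' \<le> cnt p (R-{#x#}) w'" "cnt p (R-{#x#}) w' \<le> cnt p (R-{#x#}) u' + 2"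
    "cnt p (R-{#x#}) w' = cnt p (R-{#x#}) u' + 2 \<longrightarrow> \<not> p dvd (t + x + w')"
    for x w' u'
  proof (rule Good_step[OF x])
    have sz: "size (R - {#x#}) < size R" using x(1) by (simp add: size_Diff1_less)
    have nd: "\<forall>y\<in>#R - {#x#}. \<not> p dvd y" using H(1) by (meson in_diffD)
    have sm: "\<not> p dvd (t + x + sum_mset (R - {#x#}))"
      using H(2) sum_mset.remove[OF x(1)] by (simp add: add.assoc)
    show "Good p (t + x) (R - {#x#})"
      by (rule less.hyps[OF sz nd sm wu])
  qed
  show ?case
  proof (cases "R = {#}")
    case True
    then show ?thesis by (simp add: Good_empty)
  next
    case False
    then obtain y where y: "y \<in># R" by (metis multiset_nonemptyE)
    have "cnt p R (y mod p) \<ge> 1" using y by (rule cnt_mem)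
    then have M1: "cnt p R w \<ge> 1" using H(4) H(5) by (metis le_trans)
    obtain xw where xw: "xw \<in># R" "xw mod p = w" using cnt_pos_ex[OF M1] by blast
    have dw: "p dvd (t + xw) \<longleftrightarrow> p dvd (t + w)" using dvd_iff_mod[of p t xw] xw(2) by simp
    have g0: "Good p t R" if vo: "v \<noteq> oo" "cnt p R v = cnt p R oo"
       "\<forall>r. r\<noteq>v \<and> r\<noteq>oo \<longrightarrow> cnt p R r \<le> cnt p R oo" and x: "x \<in># R" "x mod p = v"
       "\<not> p dvd (t+x)" for v oo x
    proof -
      have cv: "cnt p (R-{#x#}) v + 1 = cnt p R v" by (rule cnt_rm_same[OF x(1,2)])
      have co: "\<And>r. r \<noteq> v \<Longrightarrow> cnt p (R-{#x#}) r = cnt p R r"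
        using cnt_rm_other[OF x(1)] x(2) by metis
      show ?thesis
      proof (cases "\<exists>r. r\<noteq>v \<and> r\<noteq>oo \<and> cnt p R r = cnt p R oo")
        case True
        then obtain r where r: "r\<noteq>v" "r\<noteq>oo" "cnt p R r = cnt p R oo" by blast
        show ?thesis
        proof (rule pick[OF x(1) x(3), of oo r])
          show "oo \<noteq> r" using r by simp
          show "\<forall>r'. r' \<noteq> oo \<and> r' \<noteq> r \<longrightarrow> cnt p (R-{#x#}) r' \<le> cnt p (R-{#x#}) r"
            using co vo cv r by (metis add_leD1 order_refl)
          show "cnt p (R-{#x#}) r \<le> cnt p (R-{#x#}) oo" using co r vo by simp
          show "cnt p (R-{#x#}) oo \<le> cnt p (R-{#x#}) r + 2" using co r vo by simp
          show "cnt p (R-{#x#}) oo = cnt p (R-{#x#}) r + 2 \<longrightarrow> \<not> p dvd (t + x + oo)"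
            using co r vo by simp
        qed
      next
        case False
        show ?thesis
        proof (rule pick[OF x(1) x(3), of oo v])
          show "oo \<noteq> v" using vo by simp
          show "\<forall>r'. r' \<noteq> oo \<and> r' \<noteq> v \<longrightarrow> cnt p (R-{#x#}) r' \<le> cnt p (R-{#x#}) v"
          proof (intro allI impI)
            fix r' assume "r' \<noteq> oo \<and> r' \<noteq> v"
            then show "cnt p (R-{#x#}) r' \<le> cnt p (R-{#x#}) v"
              using False co cv vo(2) vo(3)[rule_format, of r'] by fastforce
          qed
          show "cnt p (R-{#x#}) v \<le> cnt p (R-{#x#}) oo" using co cv vo by simp
          show "cnt p (R-{#x#}) oo \<le> cnt p (R-{#x#}) v + 2" using co cv vo by simp
          show "cnt p (R-{#x#}) oo = cnt p (R-{#x#}) v + 2 \<longrightarrow> \<not> p dvd (t + x + oo)"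
            using co cv vo by simp
        qed
      qed
    qed
    have cwr: "cnt p (R-{#xw#}) w + 1 = cnt p R w" by (rule cnt_rm_same[OF xw])
    have cwo: "\<And>r. r \<noteq> w \<Longrightarrow> cnt p (R-{#xw#}) r = cnt p R r"
      using cnt_rm_other[OF xw(1)] xw(2) by metis
    consider "cnt p R w = cnt p R u + 2" | "cnt p R w = cnt p R u + 1" | "cnt p R w = cnt p R u"
      using H(5,6) by linarith
    then show ?thesis
    proof cases
      case 1
      have "\<not> p dvd (t + xw)" using H(7) 1 dw by simp
      then show ?thesis
      proof (rule pick[OF xw(1) _ H(3)])
        show "\<forall>r. r \<noteq> w \<and> r \<noteq> u \<longrightarrow> cnt p (R-{#xw#}) r \<le> cnt p (R-{#xw#}) u"
          using H(4) cwo H(3) by simp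
        show "cnt p (R-{#xw#}) u \<le> cnt p (R-{#xw#}) w" using cwo cwr 1 H(3) by simp
        show "cnt p (R-{#xw#}) w \<le> cnt p (R-{#xw#}) u + 2" using cwo cwr 1 H(3) by simp
        show "cnt p (R-{#xw#}) w = cnt p (R-{#xw#}) u + 2 \<longrightarrow> \<not> p dvd (t + xw + w)"
          using cwo cwr 1 H(3) by simp
      qed
    next
      case 2
      show ?thesis
      proof (cases "p dvd (t + w)")
        case False
        then have "\<not> p dvd (t + xw)" using dw by simp
        then show ?thesis
        proof (rule pick[OF xw(1) _ H(3)])
          show "\<forall>r. r \<noteq> w \<and> r \<noteq> u \<longrightarrow> cnt p (R-{#xw#}) r \<le> cnt p (R-{#xw#}) u"
            using H(4) cwo H(3) by simp
          show "cnt p (R-{#xw#}) u \<le> cnt p (R-{#xw#}) w" using cwo cwr 2 H(3) by simp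
          show "cnt p (R-{#xw#}) w \<le> cnt p (R-{#xw#}) u + 2" using cwo cwr 2 H(3) by simp
          show "cnt p (R-{#xw#}) w = cnt p (R-{#xw#}) u + 2 \<longrightarrow> \<not> p dvd (t + xw + w)"
            using cwo cwr 2 H(3) by simp
        qed
      next
        case True
        show ?thesis
        proof (cases "cnt p R u = 0")
          case u0: True
          have "R - {#xw#} = {#}"
          proof (rule ccontr)
            assume "R - {#xw#} \<noteq> {#}"
            then obtain z where z: "z \<in># R - {#xw#}" by (metis multiset_nonemptyE)
            have "cnt p (R - {#xw#}) (z mod p) \<ge> 1" using z by (rule cnt_mem)
            moreover have "cnt p (R - {#xw#}) (z mod p) = 0"
            proof (cases "z mod p = w")
              case True then show ?thesis using cwr 2 u0 by simp
            next
              case False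
              then have "cnt p (R - {#xw#}) (z mod p) = cnt p R (z mod p)" using cwo by simp
              also have "\<dots> \<le> cnt p R u" using H(4) False
                by (metis le_refl)
              finally show ?thesis using u0 by simp
            qed
            ultimately show False by simp
          qed
          then have "R = {#xw#}" using xw(1) by (metis insert_DiffM add_mset_remove_trivial_If)
          then have "sum_mset R = xw" by simp
          then show ?thesis using H(2) True dw by simp
        next
          case False
          then have "cnt p R u \<ge> 1" by simp
          then obtain xu where xu: "xu \<in># R" "xu mod p = u" using cnt_pos_ex by blast
          have ndu: "\<not> p dvd (t + xu)"
          proof
            assume "p dvd (t + xu)"
            then have "xw mod p = xu mod p" using dvd_same True dw by blast
            then show False using xw xu H(3) by simp
          qed
          have cur: "cnt p (R-{#xu#}) u + 1 = cnt p R u" by (rule cnt_rm_same[OF xu])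
          have cuo: "\<And>r. r \<noteq> u \<Longrightarrow> cnt p (R-{#xu#}) r = cnt p R r"
            using cnt_rm_other[OF xu(1)] xu(2) by metis
          show ?thesis
          proof (cases "\<exists>r. r\<noteq>w \<and> r\<noteq>u \<and> cnt p R r = cnt p R u")
            case True
            then obtain r where r: "r\<noteq>w" "r\<noteq>u" "cnt p R r = cnt p R u" by blast
            show ?thesis
            proof (rule pick[OF xu(1) ndu, of w r])
              show "w \<noteq> r" using r by simp
              show "\<forall>r'. r' \<noteq> w \<and> r' \<noteq> r \<longrightarrow> cnt p (R-{#xu#}) r' \<le> cnt p (R-{#xu#}) r"
                using cuo cur r H(4) by (metis add_leD1 order_refl)
              show "cnt p (R-{#xu#}) r \<le> cnt p (R-{#xu#}) w" using cuo r H(3) 2 by simp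
              show "cnt p (R-{#xu#}) w \<le> cnt p (R-{#xu#}) r + 2" using cuo r H(3) 2 by simp
              show "cnt p (R-{#xu#}) w = cnt p (R-{#xu#}) r + 2 \<longrightarrow> \<not> p dvd (t + xu + w)"
                using cuo r H(3) 2 by simp
            qed
          next
            case nr: False
            show ?thesis
            proof (rule pick[OF xu(1) ndu H(3)])
              show "\<forall>r'. r' \<noteq> w \<and> r' \<noteq> u \<longrightarrow> cnt p (R-{#xu#}) r' \<le> cnt p (R-{#xu#}) u"
              proof (intro allI impI)
                fix r' assume r': "r' \<noteq> w \<and> r' \<noteq> u"
                then show "cnt p (R-{#xu#}) r' \<le> cnt p (R-{#xu#}) u"
                  using nr cuo cur H(4)[rule_format, of r'] by fastforce
              qed
              show "cnt p (R-{#xu#}) u \<le> cnt p (R-{#xu#}) w" using cuo cur H(3) 2 by simp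
              show "cnt p (R-{#xu#}) w \<le> cnt p (R-{#xu#}) u + 2" using cuo cur H(3) 2 by simp
              show "cnt p (R-{#xu#}) w = cnt p (R-{#xu#}) u + 2 \<longrightarrow> \<not> p dvd (t + xu + w)"
              proof
                show "\<not> p dvd (t + xu + w)"
                proof
                  assume "p dvd (t + xu + w)"
                  moreover have "t + xu + w = xu + (t + w)" by simp
                  ultimately have "p dvd xu" using True by (metis dvd_add_left_iff)
                  then show False using H(1) xu(1) by blast
                qed
              qed
            qed
          qed
        qed
      qed
    next
      case 3
      have "cnt p R u \<ge> 1" using 3 M1 by simp
      then obtain xu where xu: "xu \<in># R" "xu mod p = u" using cnt_pos_ex by blast
      show ?thesis
      proof (cases "p dvd (t + xw)")
        case False
        show ?thesis
          by (rule g0[of w u xw]) (use H 3 xw False in auto)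
      next
        case True
        have ndu: "\<not> p dvd (t + xu)"
        proof
          assume "p dvd (t + xu)"
          then have "xw mod p = xu mod p" using dvd_same True by blast
          then show False using xw xu H(3) by simp
        qed
        show ?thesis
          by (rule g0[of u w xu]) (use H 3 xu ndu in auto)
      qed
    qed
  qed
qed


lemma finite_rearr: "finite {\<delta>. mset \<delta> = mset lam \<and> Q \<delta>}"
proof (rule finite_subset[OF _ finite_lists_length_eq[OF finite_set[of lam], of "length lam"]])
  show "{\<delta>. mset \<delta> = mset lam \<and> Q \<delta>} \<subseteq> {xs. set xs \<subseteq> set lam \<and> length xs = length lam}"
    by (auto dest: mset_eq_setD mset_eq_length)
qed

lemma cnt_N:
  assumes "p > 0"
  shows "cnt p (filter_mset (\<lambda>x. \<not> p dvd x) (mset lam)) r =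
     (if 1 \<le> r \<and> r < p then r_j p lam r else 0)"
proof -
  have "cnt p (filter_mset (\<lambda>x. \<not> p dvd x) (mset lam)) r =
        size (filter_mset (\<lambda>x. \<not> p dvd x \<and> x mod p = r) (mset lam))"
    by (simp add: cnt_def filter_filter_mset conj_commute)
  also have "\<dots> = (if 1 \<le> r \<and> r < p then size (filter_mset (\<lambda>x. x mod p = r mod p) (mset lam)) else 0)"
  proof (cases "1 \<le> r \<and> r < p")
    case True
    have "(\<lambda>x. \<not> p dvd x \<and> x mod p = r) = (\<lambda>x. x mod p = r mod p)"
      using True by (auto simp: dvd_eq_mod_eq_0)
    then show ?thesis using True by simp
  next
    case False
    have e: "filter_mset (\<lambda>x. \<not> p dvd x \<and> x mod p = r) (mset lam) = {#}"
      unfolding filter_mset_eq_mempty_iff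
    proof (intro allI impI)
      fix x assume "x \<in># mset lam"
      have "x mod p < p" using assms by simp
      then show "\<not> (\<not> p dvd x \<and> x mod p = r)" using False
        by (auto simp: dvd_eq_mod_eq_0)
    qed
    show ?thesis by (simp only: e if_not_P[OF False] size_empty)
  qed
  finally show ?thesis by (simp add: r_j_def flip: mset_filter)
qed


lemma take_Cons_append:
  "j \<ge> 1 \<Longrightarrow> sum_list (take j (x0 # zs @ rest)) =
     x0 + sum_list (take (j - 1) zs) + sum_list (take (j - 1 - length zs) rest)"
  by (cases j) (auto simp: take_append add.assoc)

theorem mainTheorem5:
  fixes p :: nat and lam :: "nat list" and a c :: nat
  assumes "prime p"
    and "is_partition lam"
    and "\<not> p dvd sum_list lam"
    and "a \<in> {1..p-1}" and "c \<in> {1..p-1}" and "a \<noteq> c"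
    and "r_j p lam a = max_r p lam" and "r_j p lam c = max_r p lam"
  shows "c_p p lam \<noteq> 0"
proof -
  have p0: "p > 0" using assms(1) prime_gt_0_nat by blast
  define N where "N = filter_mset (\<lambda>x. \<not> p dvd x) (mset lam)"
  define zs where "zs = filter (\<lambda>x. p dvd x) lam"
  have cN: "\<And>r. cnt p N r = (if 1 \<le> r \<and> r < p then r_j p lam r else 0)"
    unfolding N_def using cnt_N[OF p0] by blast
  have fin: "finite (r_j p lam ` {1..p-1})" by simp
  have rmax: "\<And>r. 1 \<le> r \<Longrightarrow> r < p \<Longrightarrow> r_j p lam r \<le> max_r p lam"
    unfolding max_r_def using fin by (intro Max_ge) auto
  have ac: "1 \<le> a" "a < p" "1 \<le> c" "c < p" using assms(4,5) p0 by auto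
  have split: "mset lam = N + mset zs"
    unfolding N_def zs_def by (simp add: mset_filter multiset_partition[of _ "\<lambda>x. \<not> p dvd x"])
  have "sum_list lam = sum_mset N + sum_list zs"
    using arg_cong[OF split, of sum_mset] by (simp add: sum_mset_sum_list)
  moreover have zd: "p dvd sum_list zs" by (rule dvd_sum_list) (simp add: zs_def)
  ultimately have sN: "\<not> p dvd (0 + sum_mset N)" using assms(3) by (simp add: dvd_add_left_iff)
  have "Good p 0 N"
  proof (rule main_lemma[of N p 0 a c])
    show "\<forall>x\<in>#N. \<not> p dvd x" by (simp add: N_def)
    show "\<not> p dvd (0 + sum_mset N)" by (rule sN)
    show "a \<noteq> c" by (rule assms(6))
    show "\<forall>r. r \<noteq> a \<and> r \<noteq> c \<longrightarrow> cnt p N r \<le> cnt p N c"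
      using cN rmax ac assms(8) by simp
    show "cnt p N c \<le> cnt p N a" using cN ac assms(7,8) by simp
    show "cnt p N a \<le> cnt p N c + 2" using cN ac assms(7,8) by simp
    show "cnt p N a = cnt p N c + 2 \<longrightarrow> \<not> p dvd (0 + a)" using cN ac assms(7,8) by simp
  qed
  then obtain xs where xs: "mset xs = N"
    "\<forall>j. 1 \<le> j \<and> j \<le> length xs \<longrightarrow> \<not> p dvd (0 + psum xs j)"
    unfolding Good_def by blast
  have "N \<noteq> {#}" using sN by auto
  then obtain x0 rest where xr: "xs = x0 # rest" using xs(1) by (cases xs) auto
  define \<delta> where "\<delta> = x0 # zs @ rest"
  have md: "mset \<delta> = mset lam" using split xs(1) xr by (simp add: \<delta>_def)
  have comp: "is_composition \<delta>"
    using assms(2) md unfolding is_partition_def is_composition_def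
    by (metis mset_eq_setD)
  have pc: "p_cumulative p \<delta>"
    unfolding p_cumulative_def
  proof (intro conjI allI impI)
    show "is_composition \<delta>" by (rule comp)
    show "\<delta> \<noteq> []" by (simp add: \<delta>_def)
    fix j assume j: "1 \<le> j \<and> j \<le> length \<delta>"
    define k where "k = j - 1 - length zs"
    have eq: "psum \<delta> j = sum_list (take (j - 1) zs) + psum xs (Suc k)"
      unfolding psum_def \<delta>_def k_def xr using take_Cons_append[of j x0 zs rest] j by simp
    have "Suc k \<le> length xs" using j xr unfolding k_def \<delta>_def by auto
    then have nd: "\<not> p dvd psum xs (Suc k)" using xs(2) by simp
    have "p dvd sum_list (take (j - 1) zs)"
      by (rule dvd_sum_list) (auto simp: zs_def dest: in_set_takeD)
    then show "\<not> p dvd psum \<delta> j" using nd eq by (simp add: dvd_add_right_iff)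
  qed
  have "\<delta> \<in> {\<delta>. mset \<delta> = mset lam \<and> p_cumulative p \<delta>}" using md pc by simp
  then have "{\<delta>. mset \<delta> = mset lam \<and> p_cumulative p \<delta>} \<noteq> {}" by blast
  then show ?thesis unfolding c_p_def using finite_rearr[of lam "p_cumulative p"] card_0_eq by blast
qed

end
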